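(* Let $\Omega$ be a finite ground set, let $(\Omega,\mathcal{I})$ be a matroid, let $f:2^\Omega\to\mathbb{R}$ be a normalized, monotone, submodular set function with $f(\{x\})>0$ for every $x\in\Omega$, and let $\nu$ be the curvature of $f$. Fix an integer $\alpha\ge 0$. Let $A^{\mathrm{sol}}$ be any output of the Myopic Maximization algorithm below (with arbitrary tie-breaking). Then $A^{\mathrm{sol}}\in\mathcal{I}$, and \[ \min_{B\subseteq A^{\mathrm{sol}},\ |B|\le\alpha} f(A^{\mathrm{sol}}\setminus B)\;\ge\;(1-\nu)\,\max_{A\in\mathcal{I}}\ \min_{B\subseteq A,\ |B|\le\alpha} f(A\setminus B). \]
   Context: A set function $f$ is normalized if $f(\emptyset)=0$, monotone if $f(X)\le f(Y)$ whenever $X\subseteq Y$, and submodular if $f(X\cup\{x\})-f(X)\ge f(Y\cup\{x\})-f(Y)$ for all $X\subseteq Y\subseteq\Omega$ and $x\in\Omega\setminus Y$. Write $f(x)$ for $f(\{x\})$. The curvature of $f$ is \[ \nu = 1-\min_{x\in\Omega}\frac{f(\Omega)-f(\Omega\setminus\{x\})}{f(x)}. \] The resilient submodular maximization problem is $\max_{A\in\mathcal{I}}\min_{B\subseteq A,\,|B|\le\alpha} f(A\setminus B)$. $\mathrm{rank}(\mathcal{I})$ denotes the common cardinality of the maximal independent sets (bases) of the matroid. Myopic Maximization algorithm: start with $A^{\mathrm{sol}}=\emptyset$; while $|A^{\mathrm{sol}}|<\mathrm{rank}(\mathcal{I})$, choose $a\in\arg\max\{ f(\{a\}) : a\in\Omega\setminus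 A^{\mathrm{sol}},\ A^{\mathrm{sol}}\cup\{a\}\in\mathcal{I}\}$ and set $A^{\mathrm{sol}}\gets A^{\mathrm{sol}}\cup\{a\}$; return $A^{\mathrm{sol}}$. *)

theory Defs
  imports Complex_Main
begin

definition matroid :: "'a set \<Rightarrow> 'a set set \<Rightarrow> bool" where
  "matroid \<Omega> \<I> \<longleftrightarrow> finite \<Omega> \<and> \<I> \<subseteq> Pow \<Omega> \<and> {} \<in> \<I>
     \<and> (\<forall>X Y. Y \<in> \<I> \<and> X \<subseteq> Y \<longrightarrow> X \<in> \<I>)
     \<and> (\<forall>X Y. X \<in> \<I> \<and> Y \<in> \<I> \<and> card X < card Y \<longrightarrow> (\<exists>y\<in>Y - X. insert y X \<in> \<I>))"

definition mrank :: "'a set set \<Rightarrow> nat" where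
  "mrank \<I> = Max (card ` \<I>)"

definition normalized :: "('a set \<Rightarrow> real) \<Rightarrow> bool" where
  "normalized f \<longleftrightarrow> f {} = 0"

definition monotone_sf :: "'a set \<Rightarrow> ('a set \<Rightarrow> real) \<Rightarrow> bool" where
  "monotone_sf \<Omega> f \<longleftrightarrow> (\<forall>X Y. X \<subseteq> Y \<and> Y \<subseteq> \<Omega> \<longrightarrow> f X \<le> f Y)"

definition submodular :: "'a set \<Rightarrow> ('a set \<Rightarrow> real) \<Rightarrow> bool" where
  "submodular \<Omega> f \<longleftrightarrow> (\<forall>X Y x. X \<subseteq> Y \<and> Y \<subseteq> \<Omega> \<and> x \<in> \<Omega> - Y \<longrightarrow>
      f (X \<union> {x}) - f X \<ge> f (Y \<union> {x}) - f Y)"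

definition curvature :: "'a set \<Rightarrow> ('a set \<Rightarrow> real) \<Rightarrow> real" where
  "curvature \<Omega> f = 1 - Min ((\<lambda>x. (f \<Omega> - f (\<Omega> - {x})) / f {x}) ` \<Omega>)"

definition resilient_value :: "('a set \<Rightarrow> real) \<Rightarrow> nat \<Rightarrow> 'a set \<Rightarrow> real" where
  "resilient_value f \<alpha> A = Min {f (A - B) | B. B \<subseteq> A \<and> card B \<le> \<alpha>}"

text \<open>States reachable by the Myopic Maximization loop (arbitrary tie-breaking).\<close>
inductive myopic_state :: "'a set \<Rightarrow> 'a set set \<Rightarrow> ('a set \<Rightarrow> real) \<Rightarrow> 'a set \<Rightarrow> bool"
  for \<Omega> \<I> f where
  start: "myopic_state \<Omega> \<I> f {}"
| step: "\<lbrakk> myopic_state \<Omega> \<I> f A; card A < mrank \<I>; a \<in> \<Omega> - A; insert a A \<in> \<I>;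
           \<forall>b \<in> \<Omega> - A. insert b A \<in> \<I> \<longrightarrow> f {b} \<le> f {a} \<rbrakk>
         \<Longrightarrow> myopic_state \<Omega> \<I> f (insert a A)"

definition myopic_output :: "'a set \<Rightarrow> 'a set set \<Rightarrow> ('a set \<Rightarrow> real) \<Rightarrow> 'a set \<Rightarrow> bool" where
  "myopic_output \<Omega> \<I> f A \<longleftrightarrow> myopic_state \<Omega> \<I> f A \<and> \<not> (card A < mrank \<I>)"

end

theory Submission
  imports Defs
begin

lemma matroid_props:
  assumes "matroid \<Omega> \<I>"
  shows "finite \<Omega>" "\<I> \<subseteq> Pow \<Omega>" "{} \<in> \<I>"
    "\<And>X Y. Y \<in> \<I> \<Longrightarrow> X \<subseteq> Y \<Longrightarrow> X \<in> \<I>"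
    "\<And>X Y. X \<in> \<I> \<Longrightarrow> Y \<in> \<I> \<Longrightarrow> card X < card Y \<Longrightarrow> \<exists>y\<in>Y - X. insert y X \<in> \<I>"
  using assms unfolding matroid_def by blast+

lemma greedy_inv:
  assumes M: "matroid \<Omega> \<I>" and st: "myopic_state \<Omega> \<I> f G"
  shows "G \<in> \<I> \<and> (\<forall>t. (\<exists>x\<in>G. f {x} < t) \<longrightarrow>
           (\<forall>S\<in>\<I>. (\<forall>s\<in>S. t \<le> f {s}) \<longrightarrow> card S \<le> card {x\<in>G. t \<le> f {x}}))"
  using st
proof induction
  case start
  then show ?case using matroid_props[OF M] by simp
next
  case (step A a)
  have AI: "A \<in> \<I>" using step.IH by blast
  have finA: "finite (insert a A)" using matroid_props[OF M] step.hyps(4)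
    by (meson PowD finite_subset subsetD)
  show ?case
  proof (intro conjI allI impI ballI)
    show "insert a A \<in> \<I>" by fact
    fix t S assume ex: "\<exists>x\<in>insert a A. f {x} < t" and S: "S \<in> \<I>" and St: "\<forall>s\<in>S. t \<le> f {s}"
    show "card S \<le> card {x\<in>insert a A. t \<le> f {x}}"
    proof (cases "\<exists>x\<in>A. f {x} < t")
      case True
      then have "card S \<le> card {x\<in>A. t \<le> f {x}}" using step.IH S St by blast
      also have "\<dots> \<le> card {x \<in> insert a A. t \<le> f {x}}"
        by (rule card_mono) (use finA in auto)
      finally show ?thesis .
    next
      case False
      then have fa: "f {a} < t" using ex by auto
      have eq: "{x\<in>insert a A. t \<le> f {x}} = A" using False fa by auto
      show ?thesis
      proof (rule ccontr)
        assume "\<not> ?thesis"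
        then have "card A < card S" using eq by simp
        then obtain y where y: "y \<in> S - A" "insert y A \<in> \<I>"
          using matroid_props(5)[OF M AI S] by blast
        have "y \<in> \<Omega>" using matroid_props(2)[OF M] S y by blast
        then have "f {y} \<le> f {a}" using step.hyps(5) y by blast
        with fa St y show False by force
      qed
    qed
  qed
qed

lemma thresh:
  assumes M: "matroid \<Omega> \<I>" and out: "myopic_output \<Omega> \<I> f Asol" and A: "A \<in> \<I>"
  shows "card {a\<in>A. t \<le> f {a}} \<le> card {x\<in>Asol. t \<le> f {x}}"
proof -
  have st: "myopic_state \<Omega> \<I> f Asol" and rk: "\<not> card Asol < mrank \<I>"
    using out unfolding myopic_output_def by auto
  note inv = greedy_inv[OF M st]
  have SI: "{a\<in>A. t \<le> f {a}} \<in> \<I>" by (rule matroid_props(4)[OF M A]) auto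
  show ?thesis
  proof (cases "\<exists>x\<in>Asol. f {x} < t")
    case True
    have h: "(\<exists>x\<in>Asol. f {x} < t) \<longrightarrow>
           (\<forall>S\<in>\<I>. (\<forall>s\<in>S. t \<le> f {s}) \<longrightarrow> card S \<le> card {x\<in>Asol. t \<le> f {x}})"
      using inv by (rule conjunct2[THEN spec])
    have "\<forall>S\<in>\<I>. (\<forall>s\<in>S. t \<le> f {s}) \<longrightarrow> card S \<le> card {x\<in>Asol. t \<le> f {x}}"
      using h True by (rule mp)
    then show ?thesis using SI by simp
  next
    case False
    then have eq: "{x\<in>Asol. t \<le> f {x}} = Asol" by force
    have finI: "finite \<I>"
      by (rule finite_subset[of _ "Pow \<Omega>"]) (use matroid_props(1,2)[OF M] in auto)
    have "card {a\<in>A. t \<le> f {a}} \<le> mrank \<I>"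
      unfolding mrank_def using finI SI by (simp add: Max_ge)
    then show ?thesis using eq rk by simp
  qed
qed

lemma inj_exists:
  fixes w :: "'a \<Rightarrow> real"
  assumes "finite A" "finite G" "\<forall>t. card {a\<in>A. t \<le> w a} \<le> card {x\<in>G. t \<le> w x}"
  shows "\<exists>\<phi>. inj_on \<phi> A \<and> \<phi> ` A \<subseteq> G \<and> (\<forall>a\<in>A. w a \<le> w (\<phi> a))"
  using assms
proof (induction "card A" arbitrary: A G rule: less_induct)
  case less
  show ?case
  proof (cases "A = {}")
    case True then show ?thesis by auto
  next
    case False
    obtain a0 where a0: "a0 \<in> A" "w a0 = Max (w ` A)"
      proof -
      have "Max (w ` A) \<in> w ` A" by (rule Max_in) (use less.prems(1) False in auto)
      then show ?thesis using that by auto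
    qed
    have a0m: "\<forall>a\<in>A. w a \<le> w a0" using a0 less.prems(1) by simp
    have "{a\<in>A. w a0 \<le> w a} \<noteq> {}" using a0 by auto
    moreover have "finite {a\<in>A. w a0 \<le> w a}" using less.prems(1) by simp
    ultimately have "1 \<le> card {a\<in>A. w a0 \<le> w a}"
      by (simp add: Suc_leI card_gt_0_iff)
    then have "1 \<le> card {x\<in>G. w a0 \<le> w x}" using less.prems(3)[rule_format, of "w a0"] by linarith
    then have "{x\<in>G. w a0 \<le> w x} \<noteq> {}" by (metis card.empty not_one_le_zero)
    then obtain x0 where x0: "x0 \<in> G" "w a0 \<le> w x0" by blast
    then have Gne: "G \<noteq> {}" by auto
    obtain g0 where g0: "g0 \<in> G" "w g0 = Max (w ` G)"
      proof -
      have "Max (w ` G) \<in> w ` G" by (rule Max_in) (use less.prems(2) Gne in auto)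
      then show ?thesis using that by auto
    qed
    have g0m: "\<forall>x\<in>G. w x \<le> w g0" using g0 less.prems(2) by simp
    have wg: "w a0 \<le> w g0" using x0 g0m by force
    have cond: "\<forall>t. card {a\<in>A - {a0}. t \<le> w a} \<le> card {x\<in>G - {g0}. t \<le> w x}"
    proof
      fix t
      show "card {a\<in>A - {a0}. t \<le> w a} \<le> card {x\<in>G - {g0}. t \<le> w x}"
      proof (cases "t \<le> w a0")
        case True
        have e1: "{a\<in>A - {a0}. t \<le> w a} = {a\<in>A. t \<le> w a} - {a0}" by auto
        have e2: "{x\<in>G - {g0}. t \<le> w x} = {x\<in>G. t \<le> w x} - {g0}" by auto
        have c1: "card {a\<in>A - {a0}. t \<le> w a} = card {a\<in>A. t \<le> w a} - 1"
          unfolding e1 using True a0 less.prems(1) by (subst card_Diff_singleton) auto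
        have c2: "card {x\<in>G - {g0}. t \<le> w x} = card {x\<in>G. t \<le> w x} - 1"
          unfolding e2 using True wg g0 less.prems(2) by (subst card_Diff_singleton) auto
        show ?thesis unfolding c1 c2 by (rule diff_le_mono) (use less.prems(3) in blast)
      next
        case False
        then have e: "{a\<in>A - {a0}. t \<le> w a} = {}" using a0m by force
        show ?thesis unfolding e by simp
      qed
    qed
    have "card (A - {a0}) < card A" using a0 less.prems(1) by (meson card_Diff1_less)
    then obtain \<phi> where phi: "inj_on \<phi> (A - {a0})" "\<phi> ` (A - {a0}) \<subseteq> G - {g0}"
      "\<forall>a\<in>A - {a0}. w a \<le> w (\<phi> a)"
      using less.hyps[of "A - {a0}" "G - {g0}"] less.prems cond by auto
    define \<psi> where "\<psi> = \<phi>(a0 := g0)"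
    have Aeq: "A = insert a0 (A - {a0})" using a0 by auto
    have "inj_on \<psi> (A - {a0})" using phi(1) unfolding \<psi>_def
      by (simp add: inj_on_def)
    moreover have "\<psi> a0 \<notin> \<psi> ` (A - {a0})" using phi(2) unfolding \<psi>_def by auto
    ultimately have "inj_on \<psi> (insert a0 (A - {a0}))" by (simp only: inj_on_insert) simp
    then have "inj_on \<psi> A" using Aeq by simp
    moreover have "\<psi> ` A \<subseteq> G" using phi(2) g0 unfolding \<psi>_def by auto
    moreover have "\<forall>a\<in>A. w a \<le> w (\<psi> a)" using phi(3) wg unfolding \<psi>_def by auto
    ultimately show ?thesis by blast
  qed
qed


lemma subadd:
  assumes fin: "finite \<Omega>" and nf: "normalized f" and sm: "submodular \<Omega> f" and S: "S \<subseteq> \<Omega>"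
  shows "f S \<le> (\<Sum>x\<in>S. f {x})"
proof -
  have "finite S" using fin S finite_subset by blast
  then show ?thesis using S
  proof (induction S rule: finite_induct)
    case empty then show ?case using nf by (simp add: normalized_def)
  next
    case (insert x F)
    have "f ({} \<union> {x}) - f {} \<ge> f (F \<union> {x}) - f F"
      using insert.prems insert.hyps(2)
      by (intro sm[unfolded submodular_def, rule_format]) auto
    then have "f (insert x F) \<le> f F + f {x}" using nf by (simp add: normalized_def)
    then show ?case using insert by simp
  qed
qed

lemma curv_lb:
  assumes fin: "finite \<Omega>" and nf: "normalized f" and sm: "submodular \<Omega> f" and S: "S \<subseteq> \<Omega>"
    and c: "\<forall>x\<in>\<Omega>. c * f {x} \<le> f \<Omega> - f (\<Omega> - {x})"
  shows "c * (\<Sum>x\<in>S. f {x}) \<le> f S"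
proof -
  have "finite S" using fin S finite_subset by blast
  then show ?thesis using S
  proof (induction S rule: finite_induct)
    case empty then show ?case using nf by (simp add: normalized_def)
  next
    case (insert x F)
    have xO: "x \<in> \<Omega>" using insert.prems by auto
    have "f (F \<union> {x}) - f F \<ge> f ((\<Omega> - {x}) \<union> {x}) - f (\<Omega> - {x})"
      using insert.prems insert.hyps(2)
      by (intro sm[unfolded submodular_def, rule_format]) auto
    moreover have "(\<Omega> - {x}) \<union> {x} = \<Omega>" using xO by auto
    ultimately have h4: "f (insert x F) - f F \<ge> f \<Omega> - f (\<Omega> - {x})" by simp
    have h3: "c * f {x} \<le> f \<Omega> - f (\<Omega> - {x})" using c xO by blast
    from h3 h4 have "f (insert x F) - f F \<ge> c * f {x}" by linarith
    then show ?case using insert by (simp add: distrib_left)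
  qed
qed

lemma res_props:
  assumes "finite A"
  shows "\<exists>B. B \<subseteq> A \<and> card B \<le> \<alpha> \<and> resilient_value f \<alpha> A = f (A - B)"
    "\<And>B. B \<subseteq> A \<Longrightarrow> card B \<le> \<alpha> \<Longrightarrow> resilient_value f \<alpha> A \<le> f (A - B)"
proof -
  have eq: "{f (A - B) | B. B \<subseteq> A \<and> card B \<le> \<alpha>} = (\<lambda>B. f (A - B)) ` {B. B \<subseteq> A \<and> card B \<le> \<alpha>}"
    by blast
  have fin: "finite {B. B \<subseteq> A \<and> card B \<le> \<alpha>}"
    by (rule finite_subset[of _ "Pow A"]) (use assms in auto)
  then have fin2: "finite {f (A - B) | B. B \<subseteq> A \<and> card B \<le> \<alpha>}" unfolding eq by simp
  have ne: "{f (A - B) | B. B \<subseteq> A \<and> card B \<le> \<alpha>} \<noteq> {}" by auto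
  have "resilient_value f \<alpha> A \<in> {f (A - B) | B. B \<subseteq> A \<and> card B \<le> \<alpha>}"
    unfolding resilient_value_def using fin2 ne by (rule Min_in)
  then show "\<exists>B. B \<subseteq> A \<and> card B \<le> \<alpha> \<and> resilient_value f \<alpha> A = f (A - B)" by auto
  fix B assume "B \<subseteq> A" "card B \<le> \<alpha>"
  then show "resilient_value f \<alpha> A \<le> f (A - B)"
    unfolding resilient_value_def using fin2 by (intro Min_le) auto
qed

theorem mainTheorem1:
  fixes \<Omega> :: "'a set" and \<I> :: "'a set set" and f :: "'a set \<Rightarrow> real" and \<alpha> :: nat
    and Asol :: "'a set"
  assumes "finite \<Omega>"
    and "matroid \<Omega> \<I>"
    and "normalized f" and "monotone_sf \<Omega> f" and "submodular \<Omega> f"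
    and "\<forall>x\<in>\<Omega>. f {x} > 0"
    and "myopic_output \<Omega> \<I> f Asol"
  shows "Asol \<in> \<I> \<and>
         resilient_value f \<alpha> Asol \<ge> (1 - curvature \<Omega> f) * Max (resilient_value f \<alpha> ` \<I>)"
proof -
  note M = assms(2)
  have st: "myopic_state \<Omega> \<I> f Asol" using assms(7) unfolding myopic_output_def by auto
  have AsolI: "Asol \<in> \<I>" using greedy_inv[OF M st] by blast
  have AsolO: "Asol \<subseteq> \<Omega>" using AsolI matroid_props(2)[OF M] by blast
  have finAsol: "finite Asol" using AsolO assms(1) finite_subset by blast
  have finI: "finite \<I>" by (rule finite_subset[of _ "Pow \<Omega>"]) (use matroid_props(1,2)[OF M] in auto)
  have Ine: "\<I> \<noteq> {}" using matroid_props(3)[OF M] by blast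
  have "Max (resilient_value f \<alpha> ` \<I>) \<in> resilient_value f \<alpha> ` \<I>"
    using finI Ine by (intro Max_in) auto
  then obtain As where AsI: "As \<in> \<I>" and AsM: "Max (resilient_value f \<alpha> ` \<I>) = resilient_value f \<alpha> As"
    by auto
  have AsO: "As \<subseteq> \<Omega>" using AsI matroid_props(2)[OF M] by blast
  have finAs: "finite As" using AsO assms(1) finite_subset by blast
  define R where "R = (\<lambda>x. (f \<Omega> - f (\<Omega> - {x})) / f {x}) ` \<Omega>"
  define c where "c = Min R"
  have c1: "1 - curvature \<Omega> f = c" unfolding c_def R_def curvature_def by simp
  show ?thesis
  proof (cases "\<Omega> = {}")
    case True
    then have "As = {}" using AsO by auto
    moreover have "Asol = {}" using AsolO True by auto
    moreover have "\<And>A. A = {} \<Longrightarrow> resilient_value f \<alpha> A = 0"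
    proof -
      fix A :: "'a set" assume "A = {}"
      then have "{f (A - B) | B. B \<subseteq> A \<and> card B \<le> \<alpha>} = {f {}}" by auto
      then show "resilient_value f \<alpha> A = 0" using assms(3) unfolding resilient_value_def normalized_def by simp
    qed
    ultimately show ?thesis using AsolI AsM by simp
  next
    case False
    have finR: "finite R" using assms(1) unfolding R_def by simp
    have cle: "\<forall>x\<in>\<Omega>. c * f {x} \<le> f \<Omega> - f (\<Omega> - {x})"
    proof
      fix x assume x: "x \<in> \<Omega>"
      have "c \<le> (f \<Omega> - f (\<Omega> - {x})) / f {x}" unfolding c_def using finR x R_def by (intro Min_le) auto
      then show "c * f {x} \<le> f \<Omega> - f (\<Omega> - {x})" using assms(6) x by (simp add: le_divide_eq)
    qed
    have c0: "0 \<le> c"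
    proof -
      have "c \<in> R" unfolding c_def using finR False R_def by (intro Min_in) auto
      then obtain x where x: "x \<in> \<Omega>" "c = (f \<Omega> - f (\<Omega> - {x})) / f {x}" unfolding R_def by auto
      have "f (\<Omega> - {x}) \<le> f \<Omega>" using assms(4)[unfolded monotone_sf_def, rule_format, of "\<Omega> - {x}" \<Omega>] by blast
      then show ?thesis using x assms(6) by (auto intro!: divide_nonneg_pos)
    qed
    obtain B0 where B0: "B0 \<subseteq> Asol" "card B0 \<le> \<alpha>" "resilient_value f \<alpha> Asol = f (Asol - B0)"
      using res_props(1)[OF finAsol] by blast
    have "\<forall>t. card {a\<in>As. t \<le> f {a}} \<le> card {x\<in>Asol. t \<le> f {x}}"
      using thresh[OF M assms(7) AsI] by blast
    then obtain \<phi> where phi: "inj_on \<phi> As" "\<phi> ` As \<subseteq> Asol" "\<forall>a\<in>As. f {a} \<le> f {\<phi> a}"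
      using inj_exists[OF finAs finAsol, of "\<lambda>x. f {x}"] by blast
    define B' where "B' = {a\<in>As. \<phi> a \<in> B0}"
    have finB0: "finite B0" using B0(1) finAsol finite_subset by blast
    have "card B' \<le> card B0"
      by (rule card_inj_on_le[of \<phi>]) (use phi(1) finB0 in \<open>auto simp: B'_def intro: inj_on_subset\<close>)
    then have cB': "card B' \<le> \<alpha>" using B0(2) by simp
    have "resilient_value f \<alpha> As \<le> f (As - B')"
      using res_props(2)[OF finAs, of B'] cB' unfolding B'_def by auto
    also have "\<dots> \<le> (\<Sum>x\<in>As - B'. f {x})"
      using subadd[OF assms(1) assms(3) assms(5)] AsO by blast
    also have "\<dots> \<le> (\<Sum>x\<in>As - B'. f {\<phi> x})"
      using phi(3) by (intro sum_mono) auto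
    also have "\<dots> = (\<Sum>x\<in>\<phi> ` (As - B'). f {x})"
      using phi(1) by (subst sum.reindex) (auto intro: inj_on_subset)
    also have "\<dots> \<le> (\<Sum>x\<in>Asol - B0. f {x})"
    proof (rule sum_mono2)
      show "finite (Asol - B0)" using finAsol by simp
      show "\<phi> ` (As - B') \<subseteq> Asol - B0" using phi(2) unfolding B'_def by auto
      show "\<And>b. b \<in> Asol - B0 - \<phi> ` (As - B') \<Longrightarrow> 0 \<le> f {b}"
        using AsolO assms(6) by (meson DiffD1 less_imp_le subsetD)
    qed
    finally have le1: "resilient_value f \<alpha> As \<le> (\<Sum>x\<in>Asol - B0. f {x})" .
    have "c * resilient_value f \<alpha> As \<le> c * (\<Sum>x\<in>Asol - B0. f {x})"
      using le1 c0 by (rule mult_left_mono)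
    also have "\<dots> \<le> f (Asol - B0)"
      using curv_lb[OF assms(1) assms(3) assms(5) _ cle] AsolO by blast
    finally show ?thesis using AsolI AsM c1 B0(3) by simp
  qed
qed

end
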